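(* Let $(q_i,k_i,v_i)_{i=1}^n$ be vectors in $\mathbb{R}^d$, $A_{ij}=\exp(\langle q_i,k_j\rangle/\sqrt d)$, $V\in\mathbb{R}^{n\times d}$ with rows $v_i^\top$, $v_{\max}=\|V\|_{\max}$, $\tilde k_i=k_i/d^{1/4}$, $\tilde v_i=(v_i,v_{\max})\in\mathbb{R}^{d+1}$, $\tilde q_i=q_i/d^{1/4}$, and let $\mathcal{X}_{\mathrm{in}}=\{(\tilde k_i,\tilde v_i)\}_{i=1}^n$ with $\mathcal{X}_{\mathrm{out}}$ indexed by $I_{\mathrm{out}}\subseteq[n]$, $|I_{\mathrm{out}}|=n_{\mathrm{out}}\ge1$. Let $\hat A=\frac{n}{n_{\mathrm{out}}}(A_{ij}\mathbf{1}\{j\in I_{\mathrm{out}}\})_{i,j}$. Define the query points $z_{ij}:=(\tilde q_i,e_j^{d+1})$ for $i\in[n],j\in[d+1]$ ($e_j^{d+1}$ the $j$-th standard basis vector of $\mathbb{R}^{d+1}$), and the kernel $\mathbf{k}_{\mathrm{att}}((\tilde k,\tilde v),(\tilde k',\tilde v'))=\exp(\langle\tilde k,\tilde k'\rangle)\langle\tilde v,\tilde v'\rangle$. Then $$\max\Big(\frac1n\|(\hat A-A)V\|_{\max},\ \frac1n\|(\hat A-A)\mathbf{1}_n\|_\infty\|V\|_{\max}\Big)=\max_{i\in[n],\,j\in[d+1]}\Big|\sum_{l=1}^n\mathbf{k}_{\mathrm{att}}\big(z_{ij},(\tilde k_l,\tilde v_l)\big)\Big(\frac1n-\frac{\mathbf{1}\{l\in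 I_{\mathrm{out}}\}}{n_{\mathrm{out}}}\Big)\Big|.$$ Equivalently, with the universe $\mathcal{X}=\mathcal{X}'\cup\mathcal{X}_{\mathrm{in}}$ where $\mathcal{X}'=\{z_{ij}\}$ occupies the indices $\mathcal{I}=[n(d+1)]$, and $K_{\mathrm{att}}=\mathbf{k}_{\mathrm{att}}(\mathcal{X},\mathcal{X})$, the left-hand side equals the kernel max seminorm $\|K_{\mathrm{att}}(p_{\mathrm{in}}-q_{\mathrm{out}})\|_{\mathcal{I}}=\max_{i\in\mathcal{I}}|e_i^\top K_{\mathrm{att}}(p_{\mathrm{in}}-q_{\mathrm{out}})|$.
   Context: $\|M\|_{\max}$ is the largest absolute entry of a matrix, $\|\cdot\|_\infty$ the largest absolute entry of a vector. $p_{\mathrm{in}}$ and $q_{\mathrm{out}}$ are the uniform probability vectors on $\mathcal{X}_{\mathrm{in}}$ and $\mathcal{X}_{\mathrm{out}}$ within the universe $\mathcal{X}$ (zero on $\mathcal{X}'$). *)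

theory Defs
  imports Complex_Main
begin

text \<open>Conventions: vectors in R^m are functions nat => real, meaningful on indices < m.
  Points q_i, k_i, v_i are families q :: nat => nat => real, i < n, coordinate < d. Indices are 0-based ([n] = {0..<n}).\<close>

definition dotp :: "nat \<Rightarrow> (nat \<Rightarrow> real) \<Rightarrow> (nat \<Rightarrow> real) \<Rightarrow> real" where
  "dotp m x y = (\<Sum>t<m. x t * y t)"

definition attA :: "nat \<Rightarrow> (nat \<Rightarrow> nat \<Rightarrow> real) \<Rightarrow> (nat \<Rightarrow> nat \<Rightarrow> real) \<Rightarrow> nat \<Rightarrow> nat \<Rightarrow> real" where
  "attA d q k i j = exp (dotp d (q i) (k j) / sqrt (real d))"

definition attAhat :: "nat \<Rightarrow> nat \<Rightarrow> (nat \<Rightarrow> nat \<Rightarrow> real) \<Rightarrow> (nat \<Rightarrow> nat \<Rightarrow> real) \<Rightarrow> nat set \<Rightarrow> nat \<Rightarrow> nat \<Rightarrow> real" where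
  "attAhat n d q k Iout i j =
     real n / real (card Iout) * (if j \<in> Iout then attA d q k i j else 0)"

definition maxnorm :: "nat \<Rightarrow> nat \<Rightarrow> (nat \<Rightarrow> nat \<Rightarrow> real) \<Rightarrow> real" where
  "maxnorm n d M = Max {\<bar>M i j\<bar> | i j. i < n \<and> j < d}"

definition supnorm :: "nat \<Rightarrow> (nat \<Rightarrow> real) \<Rightarrow> real" where
  "supnorm n x = Max {\<bar>x i\<bar> | i. i < n}"

definition matmul :: "nat \<Rightarrow> (nat \<Rightarrow> nat \<Rightarrow> real) \<Rightarrow> (nat \<Rightarrow> nat \<Rightarrow> real) \<Rightarrow> nat \<Rightarrow> nat \<Rightarrow> real" where
  "matmul n M N i j = (\<Sum>l<n. M i l * N l j)"

definition mulvec :: "nat \<Rightarrow> (nat \<Rightarrow> nat \<Rightarrow> real) \<Rightarrow> (nat \<Rightarrow> real) \<Rightarrow> nat \<Rightarrow> real" where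
  "mulvec n M x i = (\<Sum>l<n. M i l * x l)"

definition katt :: "nat \<Rightarrow> (nat \<Rightarrow> real) \<times> (nat \<Rightarrow> real) \<Rightarrow> (nat \<Rightarrow> real) \<times> (nat \<Rightarrow> real) \<Rightarrow> real" where
  "katt d x y = exp (dotp d (fst x) (fst y)) * dotp (d + 1) (snd x) (snd y)"

definition tscale :: "nat \<Rightarrow> (nat \<Rightarrow> real) \<Rightarrow> nat \<Rightarrow> real" where
  "tscale d x t = x t / root 4 (real d)"

definition vaug :: "nat \<Rightarrow> real \<Rightarrow> (nat \<Rightarrow> real) \<Rightarrow> nat \<Rightarrow> real" where
  "vaug d vmax x t = (if t < d then x t else if t = d then vmax else 0)"

definition ebasis :: "nat \<Rightarrow> nat \<Rightarrow> real" where
  "ebasis j t = (if t = j then 1 else 0)"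

definition zpt :: "nat \<Rightarrow> (nat \<Rightarrow> nat \<Rightarrow> real) \<Rightarrow> nat \<Rightarrow> nat \<Rightarrow> (nat \<Rightarrow> real) \<times> (nat \<Rightarrow> real)" where
  "zpt d q i j = (tscale d (q i), ebasis j)"

definition xin :: "nat \<Rightarrow> real \<Rightarrow> (nat \<Rightarrow> nat \<Rightarrow> real) \<Rightarrow> (nat \<Rightarrow> nat \<Rightarrow> real) \<Rightarrow> nat \<Rightarrow> (nat \<Rightarrow> real) \<times> (nat \<Rightarrow> real)" where
  "xin d vmax k v l = (tscale d (k l), vaug d vmax (v l))"

text \<open>Universe X = X' \<union> X_in, indexed: index i*(d+1)+j (i<n, j<d+1) is z_ij,
  index n*(d+1)+l (l<n) is the l-th data point.\<close>
definition univX :: "nat \<Rightarrow> nat \<Rightarrow> real \<Rightarrow> (nat \<Rightarrow> nat \<Rightarrow> real) \<Rightarrow> (nat \<Rightarrow> nat \<Rightarrow> real) \<Rightarrow> (nat \<Rightarrow> nat \<Rightarrow> real)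
    \<Rightarrow> nat \<Rightarrow> (nat \<Rightarrow> real) \<times> (nat \<Rightarrow> real)" where
  "univX n d vmax q k v m =
     (if m < n * (d + 1) then zpt d q (m div (d + 1)) (m mod (d + 1))
      else xin d vmax k v (m - n * (d + 1)))"

text \<open>Uniform probability vectors on X_in and X_out inside the universe (zero on X').\<close>
definition p_in :: "nat \<Rightarrow> nat \<Rightarrow> nat \<Rightarrow> real" where
  "p_in n d m = (if n * (d + 1) \<le> m \<and> m < n * (d + 1) + n then 1 / real n else 0)"

definition q_out :: "nat \<Rightarrow> nat \<Rightarrow> nat set \<Rightarrow> nat \<Rightarrow> real" where
  "q_out n d Iout m =
     (if n * (d + 1) \<le> m \<and> m - n * (d + 1) \<in> Iout then 1 / real (card Iout) else 0)"

end

theory Submission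
  imports Defs
begin

lemma root4_sq: "x \<ge> 0 \<Longrightarrow> root 4 x * root 4 x = sqrt (x::real)"
  by (metis numeral_Bit0_eq_double pos2 power2_eq_square real_root_mult_exp
    real_root_pow_pos2 real_root_power sqrt_def)

lemma dotp_tscale: "dotp d (tscale d x) (tscale d y) = dotp d x y / sqrt (real d)"
proof -
  have "dotp d (tscale d x) (tscale d y) = (\<Sum>t<d. x t * y t / (root 4 (real d) * root 4 (real d)))"
    unfolding dotp_def tscale_def by (simp add: field_simps)
  also have "\<dots> = dotp d x y / sqrt (real d)"
    unfolding dotp_def root4_sq[OF of_nat_0_le_iff] by (simp add: sum_divide_distrib)
  finally show ?thesis .
qed

lemma dotp_ebasis: assumes that: "j < m" shows "dotp m (ebasis j) w = w j"
proof -
  have "dotp m (ebasis j) w = (\<Sum>t<m. if t = j then w t else 0)"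
    unfolding dotp_def ebasis_def by (intro sum.cong) auto
  then show ?thesis using that by simp
qed

lemma katt_eq: "j < d + 1 \<Longrightarrow>
  katt d (zpt d q i j) (xin d vmax k v l) = attA d q k i l * vaug d vmax (v l) j"
  unfolding katt_def zpt_def xin_def attA_def by (simp add: dotp_tscale dotp_ebasis)

lemma Max_prod: "Max {f i j | i j. i < n \<and> j < d} = Max ((\<lambda>(i,j). f i j) ` ({..<n} \<times> {..<d}))"
  by (rule arg_cong[where f=Max]) auto

lemma Max_scale:
  assumes "finite P" "P \<noteq> {}" "(c::real) \<ge> 0"
  shows "c * Max (g ` P) = Max ((\<lambda>x. c * g x) ` P)"
proof -
  have "mono ((*) c)" using assms(3) by (simp add: mono_def mult_left_mono)
  then have "c * Max (g ` P) = Max ((*) c ` g ` P)"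
    using assms by (simp add: mono_Max_commute)
  then show ?thesis by (simp add: image_image)
qed

lemma set_cong2: assumes "\<And>i j. j < m \<Longrightarrow> (F::nat\<Rightarrow>nat\<Rightarrow>real) i j = G i j"
  shows "{F i j | i j. i < n \<and> j < m} = {G i j | i j. i < n \<and> j < m}"
proof (rule set_eqI, rule iffI)
  fix x assume "x \<in> {F i j | i j. i < n \<and> j < m}"
  then obtain i j where "i < n" "j < m" "x = F i j" by blast
  then show "x \<in> {G i j | i j. i < n \<and> j < m}" using assms[of j i] by auto
next
  fix x assume "x \<in> {G i j | i j. i < n \<and> j < m}"
  then obtain i j where ij: "i < n" "j < m" "x = G i j" by blast
  then have "x = F i j" using assms[of j i] by simp
  then show "x \<in> {F i j | i j. i < n \<and> j < m}" using ij by blast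
qed

lemma set_U: "{(S::nat\<Rightarrow>nat\<Rightarrow>real) i j | i j. i < n \<and> j < d + 1} = (\<lambda>(i,j). S i j) ` ({..<n} \<times> {..<d}) \<union> (\<lambda>i. S i d) ` {..<n}"
proof (rule set_eqI, rule iffI)
  fix x assume "x \<in> {S i j | i j. i < n \<and> j < d + 1}"
  then obtain i j where "i < n" "j < d+1" "x = S i j" by blast
  then show "x \<in> (\<lambda>(i,j). S i j) ` ({..<n} \<times> {..<d}) \<union> (\<lambda>i. S i d) ` {..<n}"
  proof (cases "j < d")
    case True then show ?thesis using \<open>i<n\<close> \<open>x = S i j\<close> by force
  next
    case False then have "j = d" using \<open>j < d+1\<close> by simp
    then show ?thesis using \<open>i<n\<close> \<open>x = S i j\<close> by blast
  qed
next
  fix x assume "x \<in> (\<lambda>(i,j). S i j) ` ({..<n} \<times> {..<d}) \<union> (\<lambda>i. S i d) ` {..<n}"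
  then show "x \<in> {S i j | i j. i < n \<and> j < d + 1}" by force
qed

lemma sum_split: "sum (f::nat\<Rightarrow>real) {..<N + n} = sum f {..<N} + sum (\<lambda>l. f (N + l)) {..<n}"
proof -
  have "sum f {..<N + n} = sum f {..<N} + sum f {N..<N+n}"
    unfolding atLeast0LessThan[symmetric] by (rule sum.atLeastLessThan_concat[symmetric]) auto
  also have "sum f {N..<N+n} = sum (\<lambda>l. f (N + l)) {..<n}"
    by (rule sum.reindex_bij_witness[of _ "\<lambda>l. N + l" "\<lambda>l. l - N"]) auto
  finally show ?thesis .
qed

theorem lemmaF2:
  fixes n d :: nat
    and q k v :: "nat \<Rightarrow> nat \<Rightarrow> real"
    and Iout :: "nat set"
  assumes "d \<ge> 1"
    and "Iout \<subseteq> {..<n}"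
    and "card Iout \<ge> 1"
  defines "vmax \<equiv> maxnorm n d v"
    and "LHS \<equiv> max (1 / real n * maxnorm n d (matmul n (\<lambda>i j. attAhat n d q k Iout i j - attA d q k i j) v))
                    (1 / real n * supnorm n (mulvec n (\<lambda>i j. attAhat n d q k Iout i j - attA d q k i j) (\<lambda>_. 1))
                       * maxnorm n d v)"
  shows "LHS = Max {\<bar>\<Sum>l<n. katt d (zpt d q i j) (xin d vmax k v l)
                      * (1 / real n - (if l \<in> Iout then 1 else 0) / real (card Iout))\<bar>
                    | i j. i < n \<and> j < d + 1}
     \<and> LHS = Max {\<bar>\<Sum>m'<n * (d + 1) + n. katt d (univX n d vmax q k v m) (univX n d vmax q k v m')
                      * (p_in n d m' - q_out n d Iout m')\<bar> | m. m < n * (d + 1)}"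
proof -
  have fin: "finite Iout" using assms(2) finite_subset by blast
  then have "Iout \<noteq> {}" using assms(3) by auto
  then have npos: "n > 0" using assms(2) by auto
  define N where "N = real (card Iout)"
  have Npos: "N > 0" unfolding N_def using assms(3) by simp
  define c where "c l = 1 / real n - (if l \<in> Iout then 1 else 0) / N" for l
  define S where "S i j = \<bar>\<Sum>l<n. attA d q k i l * vaug d vmax (v l) j * c l\<bar>" for i j
  define M where "M = (\<lambda>i j. attAhat n d q k Iout i j - attA d q k i j)"
  have P_ne: "{..<n} \<times> {..<d} \<noteq> {}"
  proof -
    have "(0,0) \<in> {..<n} \<times> {..<d}" using npos assms(1) by simp
    then show ?thesis by blast
  qed
  have vmax_nn: "vmax \<ge> 0"
  proof -
    have "\<bar>v 0 0\<bar> \<le> vmax" unfolding vmax_def maxnorm_def Max_prod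
      by (rule Max_ge) (use npos assms(1) in \<open>auto intro!: imageI\<close>)
    then show ?thesis by linarith
  qed
  have set1: "{\<bar>\<Sum>l<n. katt d (zpt d q i j) (xin d vmax k v l)
                      * (1 / real n - (if l \<in> Iout then 1 else 0) / real (card Iout))\<bar>
                    | i j. i < n \<and> j < d + 1} = {S i j | i j. i < n \<and> j < d + 1}"
  proof -
    have "\<And>i j. j < d + 1 \<Longrightarrow> \<bar>\<Sum>l<n. katt d (zpt d q i j) (xin d vmax k v l)
                      * (1 / real n - (if l \<in> Iout then 1 else 0) / real (card Iout))\<bar> = S i j"
      unfolding S_def c_def N_def by (simp add: katt_eq)
    then show ?thesis by (rule set_cong2)
  qed
  have m1: "1 / real n * \<bar>matmul n M v i j\<bar> = S i j" if "j < d" for i j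
  proof -
    have "matmul n M v i j = - real n * (\<Sum>l<n. attA d q k i l * vaug d vmax (v l) j * c l)"
      unfolding matmul_def M_def attAhat_def c_def vaug_def N_def sum_distrib_left
      using that npos by (intro sum.cong) (auto simp: field_simps)
    then show ?thesis unfolding S_def using npos by (simp add: abs_mult)
  qed
  have m1': "\<bar>matmul n M v i j\<bar> / real n = S i j" if "j < d" for i j
    using m1[OF that, of i] by simp
  have m2: "1 / real n * \<bar>mulvec n M (\<lambda>_. 1) i\<bar> * vmax = S i d" for i
  proof -
    have "mulvec n M (\<lambda>_. 1) i * vmax = - real n * (\<Sum>l<n. attA d q k i l * vaug d vmax (v l) d * c l)"
      unfolding mulvec_def M_def attAhat_def c_def vaug_def N_def sum_distrib_left sum_distrib_right
      using npos by (intro sum.cong) (auto simp: field_simps)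
    note hh = this
    then have "\<bar>mulvec n M (\<lambda>_. 1) i\<bar> * vmax = real n * S i d"
    proof -
      have "\<bar>mulvec n M (\<lambda>_. 1) i\<bar> * vmax = \<bar>mulvec n M (\<lambda>_. 1) i * vmax\<bar>"
        using vmax_nn by (simp add: abs_mult)
      then show ?thesis using hh unfolding S_def by (simp add: abs_mult)
    qed
    then show ?thesis using npos by simp
  qed
  have A: "1 / real n * maxnorm n d (matmul n M v) = Max ((\<lambda>(i,j). S i j) ` ({..<n} \<times> {..<d}))"
  proof -
    have "1 / real n * maxnorm n d (matmul n M v)
        = Max ((\<lambda>x. 1 / real n * (\<lambda>(i,j). \<bar>matmul n M v i j\<bar>) x) ` ({..<n} \<times> {..<d}))"
      unfolding maxnorm_def Max_prod by (rule Max_scale) (use P_ne in auto)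
    also have "\<dots> = Max ((\<lambda>(i,j). S i j) ` ({..<n} \<times> {..<d}))"
      by (rule arg_cong[where f=Max], rule image_cong) (auto simp: m1')
    finally show ?thesis .
  qed
  have B: "1 / real n * supnorm n (mulvec n M (\<lambda>_. 1)) * maxnorm n d v = Max ((\<lambda>i. S i d) ` {..<n})"
  proof -
    have e: "{\<bar>mulvec n M (\<lambda>_. 1) i\<bar> | i. i < n} = (\<lambda>i. \<bar>mulvec n M (\<lambda>_. 1) i\<bar>) ` {..<n}" by auto
    have "1 / real n * supnorm n (mulvec n M (\<lambda>_. 1)) * maxnorm n d v
        = (vmax / real n) * Max ((\<lambda>i. \<bar>mulvec n M (\<lambda>_. 1) i\<bar>) ` {..<n})"
      unfolding supnorm_def e vmax_def by simp
    also have "\<dots> = Max ((\<lambda>i. (vmax / real n) * \<bar>mulvec n M (\<lambda>_. 1) i\<bar>) ` {..<n})"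
      by (rule Max_scale) (use npos vmax_nn in auto)
    also have "\<dots> = Max ((\<lambda>i. S i d) ` {..<n})"
      by (rule arg_cong[where f=Max], rule image_cong) (auto simp: m2[symmetric])
    finally show ?thesis .
  qed
  have U: "{S i j | i j. i < n \<and> j < d + 1} = (\<lambda>(i,j). S i j) ` ({..<n} \<times> {..<d}) \<union> (\<lambda>i. S i d) ` {..<n}"
    by (rule set_U)
  have LHS1: "LHS = Max {S i j | i j. i < n \<and> j < d + 1}"
    unfolding LHS_def M_def[symmetric] A B U
    by (rule Max_Un[symmetric]) (use P_ne npos in auto)
  have sumeq: "(\<Sum>m'<n * (d + 1) + n. katt d (univX n d vmax q k v m) (univX n d vmax q k v m')
                      * (p_in n d m' - q_out n d Iout m'))
       = (\<Sum>l<n. attA d q k (m div (d+1)) l * vaug d vmax (v l) (m mod (d+1)) * c l)"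
    if "m < n * (d + 1)" for m
  proof -
    let ?N = "n * (d + 1)"
    let ?f = "\<lambda>m'. katt d (univX n d vmax q k v m) (univX n d vmax q k v m') * (p_in n d m' - q_out n d Iout m')"
    have "sum ?f {..<?N + n} = sum ?f {..<?N} + sum (\<lambda>l. ?f (?N + l)) {..<n}"
      by (rule sum_split)
    also have "sum ?f {..<?N} = 0" by (rule sum.neutral) (auto simp: p_in_def q_out_def)
    also have "sum (\<lambda>l. ?f (?N + l)) {..<n}
        = (\<Sum>l<n. attA d q k (m div (d+1)) l * vaug d vmax (v l) (m mod (d+1)) * c l)"
    proof (rule sum.cong)
      fix l assume l: "l \<in> {..<n}"
      have u1: "univX n d vmax q k v m = zpt d q (m div (d+1)) (m mod (d+1))"
        using that by (simp add: univX_def)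
      have u2: "univX n d vmax q k v (?N + l) = xin d vmax k v l" by (simp add: univX_def)
      have p: "p_in n d (?N + l) - q_out n d Iout (?N + l) = c l"
        using l by (simp add: p_in_def q_out_def c_def N_def)
      have "m mod (d+1) < d + 1" by simp
      then show "?f (?N + l) = attA d q k (m div (d+1)) l * vaug d vmax (v l) (m mod (d+1)) * c l"
        unfolding u1 u2 p by (simp add: katt_eq)
    qed simp
    finally show ?thesis by simp
  qed
  have set2: "{\<bar>\<Sum>m'<n * (d + 1) + n. katt d (univX n d vmax q k v m) (univX n d vmax q k v m')
                      * (p_in n d m' - q_out n d Iout m')\<bar> | m. m < n * (d + 1)}
            = {S i j | i j. i < n \<and> j < d + 1}"
  proof (rule set_eqI, rule iffI)
    fix x assume "x \<in> {\<bar>\<Sum>m'<n * (d + 1) + n. katt d (univX n d vmax q k v m) (univX n d vmax q k v m')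
                      * (p_in n d m' - q_out n d Iout m')\<bar> | m. m < n * (d + 1)}"
    then obtain m where m: "m < n * (d+1)" and x: "x = S (m div (d+1)) (m mod (d+1))"
      using sumeq unfolding S_def by auto
    have "m div (d+1) < n" using m by (simp add: less_mult_imp_div_less)
    then show "x \<in> {S i j | i j. i < n \<and> j < d + 1}" using x by fastforce
  next
    fix x assume "x \<in> {S i j | i j. i < n \<and> j < d + 1}"
    then obtain i j where ij: "i < n" "j < d + 1" and x: "x = S i j" by auto
    define m where "m = i * (d+1) + j"
    have md: "m div (d+1) = i" "m mod (d+1) = j"
    proof -
      have "m = j + i * (d+1)" unfolding m_def by simp
      then show "m div (d+1) = i" "m mod (d+1) = j" using ij
        by (simp_all only: div_mult_self1 mod_mult_self1) simp_all
    qed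
    have "m < n * (d+1)"
    proof -
      have "m < i * (d+1) + (d+1)" unfolding m_def using ij by simp
      also have "\<dots> = Suc i * (d+1)" by simp
      also have "\<dots> \<le> n * (d+1)" using ij(1) by (intro mult_right_mono) auto
      finally show ?thesis .
    qed
    note mlt = this
    have "x = \<bar>\<Sum>m'<n * (d + 1) + n. katt d (univX n d vmax q k v m) (univX n d vmax q k v m')
                      * (p_in n d m' - q_out n d Iout m')\<bar>"
      using sumeq[OF mlt] x md unfolding S_def by simp
    then show "x \<in> {\<bar>\<Sum>m'<n * (d + 1) + n. katt d (univX n d vmax q k v m) (univX n d vmax q k v m')
                      * (p_in n d m' - q_out n d Iout m')\<bar> | m. m < n * (d + 1)}"
      using mlt by blast
  qed
  show ?thesis unfolding set1 set2 using LHS1 by simp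
qed

end
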